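(* Let $d=1$. (1) If $y\in\mathbb{Q}$, then $\Pi^{y}=\{x\in\mathbb{Q}:(\mathbb{Z}x+y)\cap\mathbb{Z}\neq\emptyset\}$. (2) If $x\in\mathbb{Q}$, then $\Phi(x)=\{y\in\mathbb{Q}:(\mathbb{Z}x+y)\cap\mathbb{Z}\neq\emptyset\}$.
   Context: For $t\in\mathbb{R}$, $\|t\|$ is the distance from $t$ to $\mathbb{Z}$. Write $\mathbb{N}=\{1,2,\dots\}$. $\mathcal{D}$ is the set of all non-increasing $\psi:\mathbb{N}\to\mathbb{R}_{\ge0}$ with $\sum_n\psi(n)=\infty$. $W(\psi)$ is the set of $(x,y)\in\mathbb{R}^2$ with $\|nx+y\|<\psi(n)$ for infinitely many $n\in\mathbb{N}$, and $\Pi=\bigcap_{\psi\in\mathcal{D}}W(\psi)$. $\Phi(x)=\{y\in\mathbb{R}:(x,y)\in\Pi\}$ and $\Pi^{y}=\{x\in\mathbb{R}:(x,y)\in\Pi\}$. $\mathbb{Z}x+y=\{kx+y:k\in\mathbb{Z}\}$. *)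

theory Defs
  imports "HOL-Analysis.Analysis"
begin

definition dist_int :: "real \<Rightarrow> real" where
  "dist_int t = (INF k\<in>(\<int>::real set). \<bar>t - k\<bar>)"

text \<open>Non-increasing functions N -> R>=0 with divergent sum (N = {1,2,...}).\<close>
definition Dset :: "(nat \<Rightarrow> real) set" where
  "Dset = {\<psi>. (\<forall>n\<ge>1. \<psi> n \<ge> 0) \<and> (\<forall>m n. 1 \<le> m \<longrightarrow> m \<le> n \<longrightarrow> \<psi> n \<le> \<psi> m)
              \<and> \<not> summable (\<lambda>n. \<psi> (Suc n))}"

definition W :: "(nat \<Rightarrow> real) \<Rightarrow> (real \<times> real) set" where
  "W \<psi> = {(x, y). infinite {n::nat. n \<ge> 1 \<and> dist_int (real n * x + y) < \<psi> n}}"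

definition Pi_set :: "(real \<times> real) set" where
  "Pi_set = (\<Inter>\<psi>\<in>Dset. W \<psi>)"

definition Phi :: "real \<Rightarrow> real set" where
  "Phi x = {y. (x, y) \<in> Pi_set}"

definition Pi_sup :: "real \<Rightarrow> real set" where
  "Pi_sup y = {x. (x, y) \<in> Pi_set}"

definition Zorbit :: "real \<Rightarrow> real \<Rightarrow> real set" where
  "Zorbit x y = {real_of_int k * x + y | k. True}"

end

theory Submission
  imports Defs
begin

lemma round_le: fixes t :: real shows "\<bar>t - of_int (round t)\<bar> \<le> \<bar>t - of_int j\<bar>"
proof (cases "j = round t")
  case False
  have a: "\<bar>t - of_int (round t)\<bar> \<le> 1/2" using of_int_round_abs_le[of t] by (simp add: abs_minus_commute)
  have "\<bar>j - round t\<bar> \<ge> 1" using False by linarith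
  hence "\<bar>of_int j - (of_int (round t)::real)\<bar> \<ge> 1"
    by (metis of_int_1_le_iff of_int_abs of_int_diff)
  with a show ?thesis by linarith
qed simp

lemma dist_int_eq: "dist_int t = \<bar>t - of_int (round t)\<bar>"
  unfolding dist_int_def
proof (rule cInf_eq_minimum)
  show "\<bar>t - of_int (round t)\<bar> \<in> (\<lambda>k. \<bar>t - k\<bar>) ` \<int>" by (intro imageI) simp
next
  fix y assume "y \<in> (\<lambda>k. \<bar>t - k\<bar>) ` (\<int>::real set)"
  then obtain j where "y = \<bar>t - of_int j\<bar>" by (auto elim!: Ints_cases)
  thus "\<bar>t - of_int (round t)\<bar> \<le> y" using round_le by simp
qed

lemma dist_int_ge: "k \<in> \<int> \<Longrightarrow> dist_int t \<le> \<bar>t - k\<bar>"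
  by (auto elim!: Ints_cases simp: dist_int_eq round_le)

lemma dist_int_nonneg: "dist_int t \<ge> 0" by (simp add: dist_int_eq)

lemma dist_int_zero_iff: "dist_int t = 0 \<longleftrightarrow> t \<in> \<int>"
proof
  assume "dist_int t = 0" thus "t \<in> \<int>" by (simp add: dist_int_eq) (metis Ints_of_int)
next
  assume "t \<in> \<int>" thus "dist_int t = 0"
    using dist_int_ge[of t t] dist_int_nonneg[of t] by simp
qed

lemma dist_int_shift: "k \<in> \<int> \<Longrightarrow> dist_int (t + k) = dist_int t"
proof -
  assume k: "k \<in> \<int>"
  have le: "dist_int (s + m) \<le> dist_int s" if "m \<in> \<int>" for s m
  proof -
    have "s + m - (of_int (round s) + m) = s - of_int (round s)" by simp
    moreover have "of_int (round s) + m \<in> \<int>" using that by simp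
    ultimately show ?thesis using dist_int_ge[of "of_int (round s) + m" "s+m"]
      by (simp add: dist_int_eq)
  qed
  show ?thesis using le[OF k, of t] le[of "-k" "t+k"] k by (simp add: algebra_simps)
qed

lemma dist_int_mult: "dist_int (real q * t) \<le> real q * dist_int t"
proof -
  have "dist_int (real q * t) \<le> \<bar>real q * t - real q * of_int (round t)\<bar>"
    by (rule dist_int_ge) simp
  also have "\<dots> = real q * dist_int t" by (simp add: dist_int_eq abs_mult right_diff_distrib[symmetric])
  finally show ?thesis .
qed

lemma Dset_pos:
  assumes "\<psi> \<in> Dset" "n \<ge> 1" shows "\<psi> n > 0"
proof (rule ccontr)
  assume "\<not> \<psi> n > 0"
  with assms have z: "\<psi> n = 0" by (auto simp: Dset_def)
  have "\<psi> m = 0" if "m \<ge> n" for m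
    using assms that z by (auto simp: Dset_def) (metis order_antisym order_trans)
  hence ev: "\<forall>\<^sub>F k in sequentially. \<psi> (Suc k) = 0"
    by (auto simp: eventually_at_top_linorder intro!: exI[of _ n])
  have "summable (\<lambda>k. \<psi> (Suc k))"
    by (rule summable_cong[THEN iffD2, OF ev]) simp
  with assms show False by (simp add: Dset_def)
qed

lemma in_Pi:
  assumes x: "x \<in> \<rat>" and k: "of_int k * x + y \<in> \<int>"
  shows "(x, y) \<in> Pi_set"
proof -
  obtain a b where ab: "x = of_int a / of_int b" "b > 0" using x by (auto elim: Rats_cases')
  show ?thesis unfolding Pi_set_def
  proof
    fix \<psi> assume psi: "\<psi> \<in> Dset"
    have "infinite {n::nat. n \<ge> 1 \<and> dist_int (real n * x + y) < \<psi> n}"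
      unfolding infinite_nat_iff_unbounded
    proof
      fix m
      define j where "j = int m + \<bar>k\<bar> + 1"
      define n where "n = nat (k + j * b)"
      have "j * 1 \<le> j * b" using ab(2) j_def by (intro mult_left_mono) auto
      hence jb: "j * b \<ge> j" by simp
      have ng: "k + j * b > int m" using jb j_def by linarith
      hence nn: "int n = k + j * b" "n > m" using n_def by auto
      have rn: "real n = of_int k + of_int j * of_int b" using nn(1)
        by (metis of_int_add of_int_mult of_int_of_nat_eq)
      have b0: "(of_int b :: real) \<noteq> 0" using ab(2) by simp
      have "real n * x + y = (of_int k * x + y) + of_int (j * a)"
        unfolding rn ab(1) using b0 by (simp add: field_simps)
      hence "real n * x + y \<in> \<int>" using k Ints_add Ints_of_int by metis
      hence "dist_int (real n * x + y) = 0" by (simp add: dist_int_zero_iff)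
      moreover have "\<psi> n > 0" using Dset_pos[OF psi] nn(2) by simp
      ultimately show "\<exists>n>m. n \<in> {n. 1 \<le> n \<and> dist_int (real n * x + y) < \<psi> n}"
        using nn(2) by (intro exI[of _ n]) auto
    qed
    thus "(x, y) \<in> W \<psi>" by (simp add: W_def)
  qed
qed

lemma harm_Dset:
  assumes c: "c > 0" shows "(\<lambda>n. c / real n) \<in> Dset"
proof -
  have "\<not> summable (\<lambda>n. c / real (Suc n))"
  proof
    assume "summable (\<lambda>n. c / real (Suc n))"
    hence "summable (\<lambda>n. (1/c) * (c / real (Suc n)))" by (rule summable_mult)
    hence "summable (\<lambda>n. 1 / real (Suc n))" using c by simp
    hence "summable (\<lambda>n. 1 / real n)" by (subst summable_Suc_iff[symmetric])
    thus False using not_summable_harmonic[where 'a=real] by (simp add: inverse_eq_divide)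
  qed
  moreover have "c / real n \<le> c / real m" if "1 \<le> m" "m \<le> n" for m n
    using that c by (intro divide_left_mono) auto
  ultimately show ?thesis using c by (auto simp: Dset_def)
qed

lemma rat_case:
  assumes x: "x \<in> \<rat>" and P: "(x, y) \<in> Pi_set"
  shows "\<exists>n::nat. n \<ge> 1 \<and> real n * x + y \<in> \<int>"
proof (rule ccontr)
  assume H: "\<not> ?thesis"
  obtain a b where ab: "x = of_int a / of_int b" "b > 0" using x by (auto elim: Rats_cases')
  define B where "B = nat b"
  have B1: "B \<ge> 1" using ab(2) B_def by simp
  have bB: "real B = of_int b" using ab(2) B_def by simp
  define S where "S = (\<lambda>n. dist_int (real n * x + y)) ` {1..B}"
  define c where "c = Min S"
  have fS: "finite S" "S \<noteq> {}" using B1 by (auto simp: S_def)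
  have "c \<in> S" unfolding c_def using fS by (rule Min_in)
  then obtain r where r: "r \<in> {1..B}" "c = dist_int (real r * x + y)" by (auto simp: S_def)
  have cpos: "c > 0" using r H dist_int_nonneg[of "real r * x + y"] dist_int_zero_iff[of "real r * x + y"]
    by force
  have cle: "c \<le> dist_int (real n * x + y)" if n: "n \<ge> 1" for n
  proof -
    define r where "r = (n - 1) mod B + 1"
    define q where "q = (n - 1) div B"
    have nr: "n = r + q * B" using n by (simp add: r_def q_def)
    have rin: "r \<in> {1..B}" proof -
      have "(n - 1) mod B < B" using B1 by (intro mod_less_divisor) simp
      thus ?thesis by (simp add: r_def)
    qed
    have b0: "(of_int b :: real) \<noteq> 0" using ab(2) by simp
    have "real n * x + y = (real r * x + y) + of_int (int q * a)"
      unfolding nr ab(1) of_nat_add of_nat_mult bB using b0 by (simp add: field_simps)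
    hence "dist_int (real n * x + y) = dist_int (real r * x + y)"
      by (simp only:) (rule dist_int_shift, rule Ints_of_int)
    moreover have "c \<le> dist_int (real r * x + y)" unfolding c_def
      using fS rin by (intro Min_le) (auto simp: S_def)
    ultimately show ?thesis by simp
  qed
  have psi: "(\<lambda>n. c / real n) \<in> Dset" using harm_Dset[OF cpos] .
  have "{n::nat. n \<ge> 1 \<and> dist_int (real n * x + y) < c / real n} \<subseteq> {1}"
  proof
    fix n assume "n \<in> {n::nat. n \<ge> 1 \<and> dist_int (real n * x + y) < c / real n}"
    hence n: "n \<ge> 1" "dist_int (real n * x + y) < c / real n" by auto
    have "c / real n \<le> c" using n(1) cpos by (simp add: divide_le_eq)
    have "n = 1"
    proof (rule ccontr)
      assume "n \<noteq> 1"
      hence "c / real n < c" using n(1) cpos by (simp add: divide_less_eq)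
      thus False using cle[OF n(1)] n(2) by simp
    qed
    thus "n \<in> {1}" by simp
  qed
  hence "finite {n::nat. n \<ge> 1 \<and> dist_int (real n * x + y) < c / real n}"
    using finite_subset by blast
  moreover have "(x, y) \<in> W (\<lambda>n. c / real n)" using P psi by (auto simp: Pi_set_def)
  ultimately show False by (simp add: W_def)
qed

lemma key_ineq:
  fixes z :: real and a b :: nat
  assumes ab: "1 \<le> a" "a < b" and lt: "dist_int (real b * z) < dist_int (real a * z)"
  shows "1 < 2 * real b * dist_int (real a * z)"
proof -
  define p where "p = round (real a * z)"
  define p' where "p' = round (real b * z)"
  define D where "D = int b * p - int a * p'"
  have da: "dist_int (real a * z) = \<bar>real a * z - of_int p\<bar>" by (simp add: dist_int_eq p_def)
  have db: "dist_int (real b * z) = \<bar>real b * z - of_int p'\<bar>" by (simp add: dist_int_eq p'_def)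
  have DD: "of_int D = real a * (real b * z - of_int p') - real b * (real a * z - of_int p)"
    by (simp add: D_def algebra_simps)
  have "D \<noteq> 0"
  proof
    assume "D = 0"
    hence "real a * (real b * z - of_int p') = real b * (real a * z - of_int p)" using DD by simp
    hence "real a * dist_int (real b * z) = real b * dist_int (real a * z)"
      unfolding da db by (metis abs_mult abs_of_nat)
    moreover have "real a * dist_int (real a * z) \<le> real b * dist_int (real a * z)"
      using ab dist_int_nonneg by (intro mult_right_mono) auto
    moreover have "real a * dist_int (real b * z) < real a * dist_int (real a * z)"
      using ab lt by simp
    ultimately show False by linarith
  qed
  hence "1 \<le> \<bar>of_int D :: real\<bar>" by (metis of_int_1_le_iff of_int_abs zero_less_abs_iff int_one_le_iff_zero_less)
  also have "\<bar>of_int D :: real\<bar> \<le> real a * dist_int (real b * z) + real b * dist_int (real a * z)"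
    unfolding DD da db by (metis abs_mult abs_of_nat abs_triangle_ineq4)
  also have "real a * dist_int (real b * z) < real b * dist_int (real a * z)"
  proof -
    have "real a * dist_int (real b * z) < real a * dist_int (real a * z)" using ab lt by simp
    also have "\<dots> \<le> real b * dist_int (real a * z)" using ab dist_int_nonneg by (intro mult_right_mono) auto
    finally show ?thesis .
  qed
  hence "real a * dist_int (real b * z) + real b * dist_int (real a * z) < 2 * real b * dist_int (real a * z)" by simp
  finally show ?thesis .
qed

definition delta :: "real \<Rightarrow> nat \<Rightarrow> real" where
  "delta z n = Min ((\<lambda>m. dist_int (real m * z)) ` {1..n})"

lemma delta_le: "1 \<le> m \<Longrightarrow> m \<le> n \<Longrightarrow> delta z n \<le> dist_int (real m * z)"
  unfolding delta_def by (intro Min_le) auto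

lemma delta_in: "1 \<le> n \<Longrightarrow> \<exists>a. 1 \<le> a \<and> a \<le> n \<and> delta z n = dist_int (real a * z)"
proof -
  assume n: "1 \<le> n"
  have "delta z n \<in> (\<lambda>m. dist_int (real m * z)) ` {1..n}"
    unfolding delta_def using n by (intro Min_in) auto
  thus ?thesis by auto
qed

lemma delta_mono: "1 \<le> m \<Longrightarrow> m \<le> n \<Longrightarrow> delta z n \<le> delta z m"
  unfolding delta_def by (intro Min_antimono) auto

lemma irr_mult_notin: "z \<notin> \<rat> \<Longrightarrow> 1 \<le> m \<Longrightarrow> real m * z \<notin> \<int>"
proof
  assume z: "z \<notin> \<rat>" and m: "1 \<le> m" and i: "real m * z \<in> \<int>"
  have "z = (real m * z) / real m" using m by simp
  moreover have "(real m * z) / real m \<in> \<rat>" using i by (intro Rats_divide) (auto simp: Ints_subset_Rats[THEN subsetD])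
  ultimately show False using z by simp
qed

lemma delta_pos: "z \<notin> \<rat> \<Longrightarrow> 1 \<le> n \<Longrightarrow> delta z n > 0"
  using delta_in[of n z] irr_mult_notin[of z] dist_int_nonneg dist_int_zero_iff
  by (metis order_neq_le_trans)

lemma big_b:
  assumes z: "z \<notin> \<rat>" and M: "1 \<le> M"
  shows "\<exists>b. b > M \<and> 1 < 2 * real b * delta z (b - 1)"
proof -
  define e where "e = delta z M"
  have e: "e > 0" using delta_pos[OF z M] e_def by simp
  define N where "N = nat \<lceil>1/e\<rceil> + 1"
  have N0: "N > 0" by (simp add: N_def)
  have "real N > 1/e" unfolding N_def by linarith
  hence Ne: "1 / real N < e" using e N0 by (simp add: field_simps)
  obtain h k where hk: "0 < k" "\<bar>of_int k * z - of_int h\<bar> < 1 / real N"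
    using Dirichlet_approx[OF N0, of z] by blast
  define m where "m = nat k"
  have m1: "m \<ge> 1" using hk m_def by simp
  have "dist_int (real m * z) \<le> \<bar>real m * z - of_int h\<bar>" by (rule dist_int_ge) simp
  also have "real m * z = of_int k * z" using hk m_def by simp
  finally have "dist_int (real m * z) \<le> \<bar>of_int k * z - of_int h\<bar>"
    using hk m_def by simp
  hence dm: "dist_int (real m * z) < e" using hk Ne by linarith
  define P where "P = (\<lambda>m. 1 \<le> m \<and> dist_int (real m * z) < e)"
  have Pm: "P m" using m1 dm P_def by simp
  define b where "b = (LEAST m. P m)"
  have Pb: "P b" unfolding b_def using Pm by (rule LeastI)
  have nb: "\<not> P j" if "j < b" for j using that unfolding b_def by (rule not_less_Least)
  have small: "dist_int (real j * z) \<ge> e" if "1 \<le> j" "j < b" for j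
    using nb[OF that(2)] that(1) P_def by simp
  have bM: "b > M"
  proof (rule ccontr)
    assume "\<not> b > M"
    hence "delta z M \<le> dist_int (real b * z)" using Pb P_def by (intro delta_le) auto
    thus False using Pb P_def e_def by simp
  qed
  have b1: "1 \<le> b - 1" using bM M by simp
  obtain a where a: "1 \<le> a" "a \<le> b - 1" "delta z (b - 1) = dist_int (real a * z)"
    using delta_in[OF b1] by blast
  have "dist_int (real a * z) \<ge> e" using a small by simp
  hence "dist_int (real b * z) < dist_int (real a * z)" using Pb P_def by simp
  hence "1 < 2 * real b * dist_int (real a * z)" using a by (intro key_ineq) auto
  thus ?thesis using bM a by auto
qed

lemma irr_case:
  assumes x: "x \<notin> \<rat>" and y: "y \<in> \<rat>"
  shows "(x, y) \<notin> Pi_set"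
proof
  assume P: "(x, y) \<in> Pi_set"
  obtain p q where pq: "y = of_int p / of_int q" "q > 0" using y by (auto elim: Rats_cases')
  define Q where "Q = nat q"
  have Q1: "Q \<ge> 1" using pq Q_def by simp
  have Qq: "real Q = of_int q" using pq Q_def by simp
  define z where "z = real Q * x"
  have z: "z \<notin> \<rat>"
  proof
    assume "z \<in> \<rat>"
    hence "z / real Q \<in> \<rat>" by (intro Rats_divide) auto
    thus False using x Q1 z_def by simp
  qed
  define \<psi> where "\<psi> = (\<lambda>n. delta z n / (2 * real Q))"
  have psipos: "\<psi> n > 0" if "n \<ge> 1" for n using delta_pos[OF z that] Q1 \<psi>_def by simp
  have psimono: "\<psi> n \<le> \<psi> m" if "1 \<le> m" "m \<le> n" for m n
    using delta_mono[OF that, of z] Q1 \<psi>_def by (simp add: divide_right_mono)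
  have nsum: "\<not> summable (\<lambda>n. \<psi> (Suc n))"
  proof
    assume "summable (\<lambda>n. \<psi> (Suc n))"
    then obtain N where N: "\<And>m n. m \<ge> N \<Longrightarrow> norm (sum (\<lambda>n. \<psi> (Suc n)) {m..<n}) < 1 / (8 * real Q)"
    proof -
      have "1 / (8 * real Q) > 0" using Q1 by simp
      thus ?thesis using that \<open>summable (\<lambda>n. \<psi> (Suc n))\<close> unfolding summable_Cauchy by blast
    qed
    obtain b where b: "b > 2 * N + 2" "1 < 2 * real b * delta z (b - 1)"
      using big_b[OF z, of "2 * N + 2"] by auto
    have lb: "\<psi> (Suc k) \<ge> \<psi> (b - 1)" if "k \<in> {N..<b-1}" for k
      using that by (intro psimono) auto
    have "(\<Sum>k\<in>{N..<b-1}. \<psi> (b - 1)) \<le> sum (\<lambda>n. \<psi> (Suc n)) {N..<b-1}"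
      using lb by (intro sum_mono) auto
    hence s1: "real (b - 1 - N) * \<psi> (b - 1) \<le> sum (\<lambda>n. \<psi> (Suc n)) {N..<b-1}" by simp
    have cnt: "real (b - 1 - N) \<ge> real b / 2" using b(1) by linarith
    have "\<psi> (b - 1) > 1 / (4 * real Q * real b)"
    proof -
      have bpos: "real b > 0" using b(1) by simp
      have "delta z (b - 1) > 1 / (2 * real b)" using b(2) bpos by (simp add: field_simps)
      thus ?thesis using Q1 bpos \<psi>_def by (simp add: field_simps)
    qed
    hence "real (b - 1 - N) * \<psi> (b - 1) \<ge> (real b / 2) * (1 / (4 * real Q * real b))"
      using cnt by (intro mult_mono) auto
    moreover have "(real b / 2) * (1 / (4 * real Q * real b)) = 1 / (8 * real Q)"
      using b(1) by (simp add: field_simps)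
    ultimately have "sum (\<lambda>n. \<psi> (Suc n)) {N..<b-1} \<ge> 1 / (8 * real Q)" using s1 by linarith
    moreover have "norm (sum (\<lambda>n. \<psi> (Suc n)) {N..<b-1}) < 1 / (8 * real Q)" using N by simp
    moreover have "sum (\<lambda>n. \<psi> (Suc n)) {N..<b-1} \<ge> 0" using psipos by (intro sum_nonneg) (simp add: less_imp_le)
    ultimately show False by simp
  qed
  have D: "\<psi> \<in> Dset" unfolding Dset_def using psipos psimono nsum by (auto simp: less_imp_le)
  have empty: "{n::nat. n \<ge> 1 \<and> dist_int (real n * x + y) < \<psi> n} = {}"
  proof (rule ccontr)
    assume "\<not> ?thesis"
    then obtain n where n: "n \<ge> 1" "dist_int (real n * x + y) < \<psi> n" by auto
    have "real Q * (real n * x + y) = real n * z + of_int p"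
      using pq Qq z_def by (simp add: field_simps)
    hence "dist_int (real n * z) = dist_int (real Q * (real n * x + y))"
      by (simp add: dist_int_shift)
    also have "\<dots> \<le> real Q * dist_int (real n * x + y)" by (rule dist_int_mult)
    finally have "delta z n \<le> real Q * dist_int (real n * x + y)"
      using delta_le[OF n(1) order_refl, of z] by linarith
    hence "2 * \<psi> n \<le> dist_int (real n * x + y)" using Q1 \<psi>_def by (simp add: field_simps)
    thus False using n psipos[OF n(1)] by linarith
  qed
  have "(x, y) \<in> W \<psi>" using P D by (auto simp: Pi_set_def)
  hence "infinite {n::nat. n \<ge> 1 \<and> dist_int (real n * x + y) < \<psi> n}"
    by (simp only: W_def mem_Collect_eq case_prod_conv not_False_eq_True)
  thus False unfolding empty by simp
qed

theorem proposition20: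
  shows "(\<forall>y\<in>\<rat>. Pi_sup y = {x\<in>\<rat>. Zorbit x y \<inter> \<int> \<noteq> {}}) \<and>
         (\<forall>x\<in>\<rat>. Phi x = {y\<in>\<rat>. Zorbit x y \<inter> \<int> \<noteq> {}})"
proof (intro conjI ballI set_eqI iffI)
  fix y x assume y: "y \<in> \<rat>" and "x \<in> Pi_sup y"
  hence P: "(x, y) \<in> Pi_set" by (simp add: Pi_sup_def)
  hence xq: "x \<in> \<rat>" using irr_case y by blast
  obtain n :: nat where "n \<ge> 1" "real n * x + y \<in> \<int>" using rat_case[OF xq P] by blast
  hence "real n * x + y \<in> Zorbit x y \<inter> \<int>" unfolding Zorbit_def
    by (auto intro!: exI[of _ "int n"])
  thus "x \<in> {x \<in> \<rat>. Zorbit x y \<inter> \<int> \<noteq> {}}" using xq by blast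
next
  fix y x assume "x \<in> {x \<in> \<rat>. Zorbit x y \<inter> \<int> \<noteq> {}}"
  then obtain k where "x \<in> \<rat>" "of_int k * x + y \<in> \<int>" by (auto simp: Zorbit_def)
  thus "x \<in> Pi_sup y" using in_Pi by (simp add: Pi_sup_def)
next
  fix x y assume x: "x \<in> \<rat>" and "y \<in> Phi x"
  hence P: "(x, y) \<in> Pi_set" by (simp add: Phi_def)
  obtain n :: nat where n: "n \<ge> 1" "real n * x + y \<in> \<int>" using rat_case[OF x P] by blast
  have "y = (real n * x + y) - real n * x" by simp
  moreover have "real n * x \<in> \<rat>" using x by simp
  moreover have "real n * x + y \<in> \<rat>" using n Ints_subset_Rats by blast
  ultimately have yq: "y \<in> \<rat>" by (metis Rats_diff)
  have "real n * x + y \<in> Zorbit x y \<inter> \<int>" using n unfolding Zorbit_def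
    by (auto intro!: exI[of _ "int n"])
  thus "y \<in> {y \<in> \<rat>. Zorbit x y \<inter> \<int> \<noteq> {}}" using yq by blast
next
  fix x y assume x: "x \<in> \<rat>" and "y \<in> {y \<in> \<rat>. Zorbit x y \<inter> \<int> \<noteq> {}}"
  then obtain k where "of_int k * x + y \<in> \<int>" by (auto simp: Zorbit_def)
  thus "y \<in> Phi x" using in_Pi[OF x] by (simp add: Phi_def)
qed

end
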